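(* The Banach lattice $\ell_\infty$ does not have the unbounded Grothendieck property.
   Context: For a Banach lattice $E$ with dual $E'$, a sequence $(x_n')\subseteq E'$ is unbounded weak$^*$ convergent to $0$ (written $x_n'\xrightarrow{uaw^*}0$) if $|x_n'|\wedge u'\to 0$ in the weak$^*$ topology $\sigma(E',E)$ for every $u'\in E'_+$. $E$ has the unbounded Grothendieck property if every norm bounded sequence $(x_n')\subseteq E'$ with $x_n'\xrightarrow{uaw^*}0$ converges to $0$ weakly (in $\sigma(E',E'')$). *)

theory Defs
  imports "HOL-Analysis.Analysis"
begin

text \<open>The order on l_infinity is pointwise; the lattice
operations on the dual are given by the Riesz--Kantorovich formulas, evaluated on
positive elements and extended linearly via x = x^+ - x^-.\<close>

type_synonym linf = "nat \<Rightarrow>\<^sub>C real"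
type_synonym linf_dual = "linf \<Rightarrow>\<^sub>L real"
type_synonym linf_bidual = "linf_dual \<Rightarrow>\<^sub>L real"

definition linf_le :: "linf \<Rightarrow> linf \<Rightarrow> bool" where
  "linf_le x y \<longleftrightarrow> (\<forall>i. apply_bcontfun x i \<le> apply_bcontfun y i)"

definition linf_pos_part :: "linf \<Rightarrow> linf" where
  "linf_pos_part x = Bcontfun (\<lambda>i. max (apply_bcontfun x i) 0)"

definition linf_neg_part :: "linf \<Rightarrow> linf" where
  "linf_neg_part x = Bcontfun (\<lambda>i. max (- apply_bcontfun x i) 0)"

definition dual_positive :: "linf_dual \<Rightarrow> bool" where
  "dual_positive u \<longleftrightarrow> (\<forall>x. linf_le 0 x \<longrightarrow> 0 \<le> blinfun_apply u x)"

definition dual_abs_pos :: "linf_dual \<Rightarrow> linf \<Rightarrow> real" where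
  "dual_abs_pos f x = (SUP y\<in>{y. \<forall>i. \<bar>apply_bcontfun y i\<bar> \<le> apply_bcontfun x i}. \<bar>blinfun_apply f y\<bar>)"

definition dual_absinf_pos :: "linf_dual \<Rightarrow> linf_dual \<Rightarrow> linf \<Rightarrow> real" where
  "dual_absinf_pos f u x =
     (INF y\<in>{y. linf_le 0 y \<and> linf_le y x}. dual_abs_pos f y + blinfun_apply u (x - y))"

definition dual_absinf :: "linf_dual \<Rightarrow> linf_dual \<Rightarrow> linf \<Rightarrow> real" where
  "dual_absinf f u x = dual_absinf_pos f u (linf_pos_part x) - dual_absinf_pos f u (linf_neg_part x)"

definition uaw_star_null :: "(nat \<Rightarrow> linf_dual) \<Rightarrow> bool" where
  "uaw_star_null xs \<longleftrightarrow>
     (\<forall>u. dual_positive u \<longrightarrow> (\<forall>x. (\<lambda>n. dual_absinf (xs n) u x) \<longlonglongrightarrow> 0))"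

definition weakly_null :: "(nat \<Rightarrow> linf_dual) \<Rightarrow> bool" where
  "weakly_null xs \<longleftrightarrow> (\<forall>\<phi> :: linf_bidual. (\<lambda>n. blinfun_apply \<phi> (xs n)) \<longlonglongrightarrow> 0)"

definition linf_unbounded_Grothendieck :: bool where
  "linf_unbounded_Grothendieck \<longleftrightarrow>
     (\<forall>xs. bounded (range xs) \<longrightarrow> uaw_star_null xs \<longrightarrow> weakly_null xs)"

end

theory Submission
  imports Defs
begin

lemma Bcontfun_app:
  fixes g :: "nat \<Rightarrow> real"
  assumes "\<And>i. \<bar>g i\<bar> \<le> B"
  shows "apply_bcontfun (Bcontfun g) = g"
proof -
  have "g \<in> bcontfun" by (rule bcontfun_normI[where b=B]) (auto simp: assms)
  thus ?thesis by (simp add: Bcontfun_inverse)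
qed

lemma app_le_norm: "\<bar>apply_bcontfun (x::linf) i\<bar> \<le> norm x"
  using norm_bounded[of x i] by simp

definition dlt :: "nat \<Rightarrow> linf_dual" where
  "dlt n = Blinfun (\<lambda>x. apply_bcontfun x n)"

lemma dlt_bl: "bounded_linear (\<lambda>x::linf. apply_bcontfun x n)"
  apply (rule bounded_linear_intro[where K=1])
  using app_le_norm by auto

lemma dlt_apply[simp]: "blinfun_apply (dlt n) x = apply_bcontfun x n"
  unfolding dlt_def using bounded_linear_Blinfun_apply[OF dlt_bl] by simp

definition en :: "nat \<Rightarrow> linf" where
  "en n = Bcontfun (\<lambda>i. if i = n then 1 else 0)"

lemma en_apply[simp]: "apply_bcontfun (en n) i = (if i = n then 1 else 0)"
  unfolding en_def by (subst Bcontfun_app[where B=1]) auto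

lemma pos_mono:
  assumes "dual_positive u" "\<And>i. apply_bcontfun x i \<le> apply_bcontfun y i"
  shows "blinfun_apply u x \<le> blinfun_apply u y"
proof -
  have "0 \<le> blinfun_apply u (y - x)"
    using assms unfolding dual_positive_def linf_le_def by auto
  thus ?thesis by (simp add: blinfun.diff_right)
qed

lemma u_en_nonneg: "dual_positive u \<Longrightarrow> 0 \<le> blinfun_apply u (en n)"
  unfolding dual_positive_def linf_le_def by auto

lemma u_en_tendsto:
  assumes "dual_positive u"
  shows "(\<lambda>n. blinfun_apply u (en n)) \<longlonglongrightarrow> 0"
proof -
  have "summable (\<lambda>n. blinfun_apply u (en n))"
  proof (rule summableI_nonneg_bounded[where x="blinfun_apply u (const_bcontfun 1)"])
    fix n
    show "0 \<le> blinfun_apply u (en n)" using u_en_nonneg[OF assms] .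
  next
    fix N
    have "(\<Sum>i<N. blinfun_apply u (en i)) = blinfun_apply u (\<Sum>i<N. en i)"
      by (simp add: blinfun.sum_right)
    also have "\<dots> \<le> blinfun_apply u (const_bcontfun 1)"
    proof (rule pos_mono[OF assms])
      fix i
      have "apply_bcontfun (\<Sum>k<N. en k) i = (\<Sum>k<N. apply_bcontfun (en k) i)"
        by (induction N) auto
      also have "\<dots> \<le> 1" by (simp add: sum.If_cases)
      finally show "apply_bcontfun (\<Sum>k<N. en k) i \<le> apply_bcontfun (const_bcontfun 1) i"
        by simp
    qed
    finally show "(\<Sum>i<N. blinfun_apply u (en i)) \<le> blinfun_apply u (const_bcontfun 1)" .
  qed
  thus ?thesis by (rule summable_LIMSEQ_zero)
qed

lemma abs_pos_dlt:
  assumes "linf_le 0 y"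
  shows "dual_abs_pos (dlt n) y = apply_bcontfun y n"
proof -
  let ?S = "{w::linf. \<forall>i. \<bar>apply_bcontfun w i\<bar> \<le> apply_bcontfun y i}"
  have y0: "\<And>i. 0 \<le> apply_bcontfun y i" using assms by (simp add: linf_le_def)
  have yS: "y \<in> ?S" using y0 by auto
  have bd: "bdd_above ((\<lambda>w. \<bar>blinfun_apply (dlt n) w\<bar>) ` ?S)"
    by (rule bdd_aboveI[where M="apply_bcontfun y n"]) auto
  have "(SUP w\<in>?S. \<bar>blinfun_apply (dlt n) w\<bar>) = apply_bcontfun y n"
  proof (rule antisym)
    show "(SUP w\<in>?S. \<bar>blinfun_apply (dlt n) w\<bar>) \<le> apply_bcontfun y n"
      by (rule cSUP_least) (use yS in blast, auto)
    show "apply_bcontfun y n \<le> (SUP w\<in>?S. \<bar>blinfun_apply (dlt n) w\<bar>)"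
      using cSUP_upper[OF yS bd] y0[of n] by simp
  qed
  thus ?thesis unfolding dual_abs_pos_def .
qed

lemma absinf_pos_bounds:
  assumes u: "dual_positive u" and z: "linf_le 0 z"
  shows "0 \<le> dual_absinf_pos (dlt n) u z \<and>
         dual_absinf_pos (dlt n) u z \<le> norm z * blinfun_apply u (en n)"
proof -
  let ?T = "{y. linf_le 0 y \<and> linf_le y z}"
  let ?f = "\<lambda>y. dual_abs_pos (dlt n) y + blinfun_apply u (z - y)"
  have z0: "\<And>i. 0 \<le> apply_bcontfun z i" using z by (simp add: linf_le_def)
  have fpos: "0 \<le> ?f y" if "y \<in> ?T" for y
  proof -
    have "dual_abs_pos (dlt n) y = apply_bcontfun y n" using that abs_pos_dlt by auto
    moreover have "0 \<le> apply_bcontfun y n" using that by (auto simp: linf_le_def)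
    moreover have "0 \<le> blinfun_apply u (z - y)"
      using that u unfolding dual_positive_def linf_le_def by auto
    ultimately show ?thesis by simp
  qed
  have T0: "0 \<in> ?T" using z by (simp add: linf_le_def)
  have lo: "0 \<le> (INF y\<in>?T. ?f y)"
    by (rule cINF_greatest) (use T0 fpos in auto)
  define y' where "y' = Bcontfun (\<lambda>i. if i = n then 0 else apply_bcontfun z i)"
  have y'a: "apply_bcontfun y' = (\<lambda>i. if i = n then 0 else apply_bcontfun z i)"
    unfolding y'_def by (rule Bcontfun_app[where B="norm z"]) (use app_le_norm in auto)
  have y'T: "y' \<in> ?T" using z0 by (auto simp: linf_le_def y'a)
  have zy: "z - y' = apply_bcontfun z n *\<^sub>R en n"
    by (rule bcontfun_eqI) (auto simp: y'a)
  have fy': "?f y' = apply_bcontfun z n * blinfun_apply u (en n)"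
  proof -
    have "dual_abs_pos (dlt n) y' = 0"
      using abs_pos_dlt[of y' n] y'T by (simp add: y'a)
    thus ?thesis by (simp add: zy blinfun.scaleR_right)
  qed
  have bb: "bdd_below (?f ` ?T)" by (rule bdd_belowI[where m=0]) (use fpos in auto)
  have "(INF y\<in>?T. ?f y) \<le> ?f y'" by (rule cINF_lower[OF bb y'T])
  also have "\<dots> \<le> norm z * blinfun_apply u (en n)"
    unfolding fy' using app_le_norm[of z n] u_en_nonneg[OF u, of n]
    by (intro mult_right_mono) auto
  finally show ?thesis using lo unfolding dual_absinf_pos_def by simp
qed

lemma posneg:
  "linf_le 0 (linf_pos_part x) \<and> linf_le 0 (linf_neg_part x)"
proof -
  have a: "apply_bcontfun (linf_pos_part x) = (\<lambda>i. max (apply_bcontfun x i) 0)"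
    unfolding linf_pos_part_def
    by (rule Bcontfun_app[where B="norm x"]) (use app_le_norm[of x] in \<open>auto simp: abs_le_iff\<close>)
  have b: "apply_bcontfun (linf_neg_part x) = (\<lambda>i. max (- apply_bcontfun x i) 0)"
    unfolding linf_neg_part_def
    by (rule Bcontfun_app[where B="norm x"]) (use app_le_norm[of x] in \<open>auto simp: abs_le_iff\<close>)
  show ?thesis by (simp add: linf_le_def a b)
qed

lemma dlt_uaw: "uaw_star_null dlt"
  unfolding uaw_star_null_def
proof (intro allI impI)
  fix u x assume u: "dual_positive u"
  let ?p = "linf_pos_part x" and ?q = "linf_neg_part x"
  show "(\<lambda>n. dual_absinf (dlt n) u x) \<longlonglongrightarrow> 0"
  proof (rule Lim_null_comparison)
    show "\<forall>\<^sub>F n in sequentially. norm (dual_absinf (dlt n) u x)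
            \<le> (norm ?p + norm ?q) * blinfun_apply u (en n)"
    proof (intro always_eventually allI)
      fix n
      have A: "0 \<le> dual_absinf_pos (dlt n) u ?p \<and>
         dual_absinf_pos (dlt n) u ?p \<le> norm ?p * blinfun_apply u (en n)"
        using absinf_pos_bounds[OF u] posneg by blast
      have B: "0 \<le> dual_absinf_pos (dlt n) u ?q \<and>
         dual_absinf_pos (dlt n) u ?q \<le> norm ?q * blinfun_apply u (en n)"
        using absinf_pos_bounds[OF u] posneg by blast
      have C: "0 \<le> norm ?p * blinfun_apply u (en n)" "0 \<le> norm ?q * blinfun_apply u (en n)"
        using u_en_nonneg[OF u, of n] by auto
      show "norm (dual_absinf (dlt n) u x) \<le> (norm ?p + norm ?q) * blinfun_apply u (en n)"
        unfolding dual_absinf_def using A B C by (simp add: algebra_simps abs_le_iff)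
    qed
    show "(\<lambda>n. (norm ?p + norm ?q) * blinfun_apply u (en n)) \<longlonglongrightarrow> 0"
      using tendsto_mult_right_zero[OF u_en_tendsto[OF u]] by simp
  qed
qed

lemma dlt_bounded: "bounded (range dlt)"
proof -
  have "norm (dlt n) \<le> 1" for n
    by (rule norm_blinfun_bound) (use app_le_norm in auto)
  thus ?thesis by (intro boundedI[where B=1]) auto
qed

lemma dlt_not_weak: "\<not> weakly_null dlt"
proof
  assume "weakly_null dlt"
  hence "(\<lambda>n. blinfun_apply (Blinfun (\<lambda>f::linf_dual. blinfun_apply f (const_bcontfun 1))) (dlt n))
          \<longlonglongrightarrow> 0"
    unfolding weakly_null_def by blast
  hence "(\<lambda>n. 1::real) \<longlonglongrightarrow> 0"
    by (simp add: bounded_linear_Blinfun_apply blinfun.bounded_linear_left)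
  thus False by (simp add: LIMSEQ_const_iff)
qed

theorem lemma2p3:
  shows "\<not> linf_unbounded_Grothendieck"
  unfolding linf_unbounded_Grothendieck_def
  using dlt_uaw dlt_bounded dlt_not_weak by blast

end
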